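(* There exists $p\in\mathcal P$ such that $D_{\mu(p)}(p)\neq N$ and $D_{\mu(p)}(p)\cap D_{\mu(p^r)}(p^r)\neq\varnothing$ if and only if $(h,n)\notin T_3$, where $T_3=\{(h,n): n=2\}\cup\{(3,3)\}$.
   Context: Let $n,h\ge2$ be integers, $N=\{1,\dots,n\}$, $H=\{1,\dots,h\}$. $\mathcal P$ is the set of $h$-tuples $p=(p_1,\dots,p_h)$ of linear orders on $N$; $p^r$ is obtained by reversing each $p_i$; $x>_{p_i}y$ means $x\ne y$ and $p_i$ ranks $x$ above $y$. For an integer $\mu$ with $h/2<\mu\le h$, $D_\mu(p)=\{x\in N: \forall y\in N,\ |\{i: y>_{p_i}x\}|<\mu\}$, and $\mu(p)=\min\{\mu\in\mathbb N\cap(h/2,h]: D_\mu(p)\neq\varnothing\}$. *)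

theory Defs
  imports Main
begin

(* A linear order on N is a relation r with (a,b) \<in> r meaning "a is ranked at or below b".
   x >_r y : x \<noteq> y and r ranks x above y. *)
definition above :: "(nat \<times> nat) set \<Rightarrow> nat \<Rightarrow> nat \<Rightarrow> bool" where
  "above r x y \<longleftrightarrow> x \<noteq> y \<and> (y, x) \<in> r"

definition profiles :: "nat \<Rightarrow> nat \<Rightarrow> (nat \<Rightarrow> (nat \<times> nat) set) set" where
  "profiles n h = {p. \<forall>i\<in>{1..h}. linear_order_on {1..n} (p i)}"

definition rev_profile :: "(nat \<Rightarrow> (nat \<times> nat) set) \<Rightarrow> (nat \<Rightarrow> (nat \<times> nat) set)" where
  "rev_profile p = (\<lambda>i. converse (p i))"

definition Dmu :: "nat \<Rightarrow> nat \<Rightarrow> nat \<Rightarrow> (nat \<Rightarrow> (nat \<times> nat) set) \<Rightarrow> nat set" where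
  "Dmu n h \<mu> p = {x \<in> {1..n}. \<forall>y\<in>{1..n}. card {i \<in> {1..h}. above (p i) y x} < \<mu>}"

definition mu_of :: "nat \<Rightarrow> nat \<Rightarrow> (nat \<Rightarrow> (nat \<times> nat) set) \<Rightarrow> nat" where
  "mu_of n h p = (LEAST \<mu>. h < 2 * \<mu> \<and> \<mu> \<le> h \<and> Dmu n h \<mu> p \<noteq> {})"

definition T3 :: "(nat \<times> nat) set" where
  "T3 = {(h, n). n = 2} \<union> {(3, 3)}"

end

theory Submission
  imports Defs
begin

definition cnt :: "nat \<Rightarrow> (nat \<Rightarrow> (nat\<times>nat) set) \<Rightarrow> nat \<Rightarrow> nat \<Rightarrow> nat" where
  "cnt h p y x = card {i \<in> {1..h}. above (p i) y x}"

lemma Dmu_cnt: "Dmu n h \<mu> p = {x\<in>{1..n}. \<forall>y\<in>{1..n}. cnt h p y x < \<mu>}"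
  by (simp add: Dmu_def cnt_def)

lemma cnt_rev: "cnt h (rev_profile p) y x = cnt h p x y"
  unfolding cnt_def rev_profile_def above_def
  by (rule arg_cong[where f=card]) auto

lemma cnt_le: "cnt h p y x \<le> h"
proof -
  have "cnt h p y x \<le> card {1..h}" unfolding cnt_def by (rule card_mono) auto
  thus ?thesis by simp
qed

lemma cnt_self: "cnt h p x x = 0"
  unfolding cnt_def above_def by simp

lemma lin_of: "p \<in> profiles n h \<Longrightarrow> i \<in> {1..h} \<Longrightarrow> linear_order_on {1..n} (p i)"
  by (simp add: profiles_def)

lemma cnt_compl:
  assumes "p \<in> profiles n h" "x \<in> {1..n}" "y \<in> {1..n}" "x \<noteq> y"
  shows "cnt h p y x + cnt h p x y = h"
proof -
  let ?A = "{i\<in>{1..h}. above (p i) y x}"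
  let ?B = "{i\<in>{1..h}. above (p i) x y}"
  have d: "?A \<inter> ?B = {}"
  proof (rule ccontr)
    assume "?A \<inter> ?B \<noteq> {}"
    then obtain i where i: "i \<in> {1..h}" "(x,y) \<in> p i" "(y,x) \<in> p i" unfolding above_def by auto
    have "antisym (p i)" using lin_of[OF assms(1) i(1)]
      by (simp add: linear_order_on_def partial_order_on_def)
    thus False using i assms(4) by (auto dest: antisymD)
  qed
  have u: "?A \<union> ?B = {1..h}"
  proof -
    have "?A \<union> ?B \<supseteq> {1..h}"
    proof
      fix i assume i: "i \<in> {1..h}"
      have "total_on {1..n} (p i)" using lin_of[OF assms(1) i]
        by (simp add: linear_order_on_def)
      thus "i \<in> ?A \<union> ?B" using i assms(2-4) unfolding total_on_def above_def by auto
    qed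
    thus ?thesis by auto
  qed
  have "card (?A \<union> ?B) = card ?A + card ?B" using d by (intro card_Un_disjoint) auto
  thus ?thesis using u unfolding cnt_def by simp
qed

lemma D_h_nonempty:
  assumes "p \<in> profiles n h" "h \<ge> 1" "n \<ge> 1"
  shows "Dmu n h h p \<noteq> {}"
proof -
  define r where "r = p 1"
  have lin: "linear_order_on {1..n} r" using lin_of[OF assms(1)] assms(2) r_def by simp
  have tr: "trans r" and an: "antisym r" and rf: "refl_on {1..n} r"
    using lin by (auto simp: linear_order_on_def partial_order_on_def preorder_on_def)
  define g where "g x = card {w \<in> {1..n}. (w,x) \<in> r}" for x
  have "Max (g ` {1..n}) \<in> g ` {1..n}" using assms(3) by (intro Max_in) auto
  then obtain x where x: "x \<in> {1..n}" "g x = Max (g ` {1..n})" by auto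
  have xm: "g y \<le> g x" if "y \<in> {1..n}" for y using x(2) that by simp
  have "x \<in> Dmu n h h p"
    unfolding Dmu_cnt
  proof (intro CollectI conjI ballI)
    show "x \<in> {1..n}" by fact
    fix y :: nat assume y: "y \<in> {1..n}"
    show "cnt h p y x < h"
    proof (rule ccontr)
      assume "\<not> cnt h p y x < h"
      hence e: "card {i \<in> {1..h}. above (p i) y x} = card {1..h}" using cnt_le[of h p y x] unfolding cnt_def by simp
      have "{i \<in> {1..h}. above (p i) y x} = {1..h}"
        using card_subset_eq[of "{1..h}" "{i \<in> {1..h}. above (p i) y x}"] e by blast
      hence "1 \<in> {i \<in> {1..h}. above (p i) y x}" using assms(2) by simp
      hence "above r y x" unfolding r_def by simp
      hence yx: "y \<noteq> x" "(x,y) \<in> r" unfolding above_def by auto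
      have "{w \<in> {1..n}. (w,x) \<in> r} \<subset> {w \<in> {1..n}. (w,y) \<in> r}"
      proof
        show "{w \<in> {1..n}. (w,x) \<in> r} \<subseteq> {w \<in> {1..n}. (w,y) \<in> r}"
        proof
          fix w assume "w \<in> {w \<in> {1..n}. (w,x) \<in> r}"
          thus "w \<in> {w \<in> {1..n}. (w,y) \<in> r}" using transD[OF tr _ yx(2)] by blast
        qed
        have "y \<in> {w \<in> {1..n}. (w,y) \<in> r}" using rf y by (auto simp: refl_on_def)
        moreover have "y \<notin> {w \<in> {1..n}. (w,x) \<in> r}" using an yx by (auto dest: antisymD)
        ultimately show "{w \<in> {1..n}. (w,x) \<in> r} \<noteq> {w \<in> {1..n}. (w,y) \<in> r}" by blast
      qed
      hence "g x < g y" unfolding g_def by (intro psubset_card_mono) auto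
      thus False using xm[OF y] by simp
    qed
  qed
  thus ?thesis by blast
qed

lemma mu_props:
  assumes "p \<in> profiles n h" "h \<ge> 1" "n \<ge> 1"
  shows "h < 2 * mu_of n h p \<and> mu_of n h p \<le> h \<and> Dmu n h (mu_of n h p) p \<noteq> {}"
  unfolding mu_of_def
  by (rule LeastI[of _ h]) (use D_h_nonempty[OF assms] assms in auto)

lemma mu_le: "h < 2*\<mu> \<Longrightarrow> \<mu> \<le> h \<Longrightarrow> Dmu n h \<mu> p \<noteq> {} \<Longrightarrow> mu_of n h p \<le> \<mu>"
  unfolding mu_of_def by (rule Least_le) simp

lemma rev_in: "p \<in> profiles n h \<Longrightarrow> rev_profile p \<in> profiles n h"
  by (simp add: profiles_def rev_profile_def)

lemma n2_case:
  assumes p: "p \<in> profiles 2 h" and h: "h \<ge> 2"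
  and x: "x \<in> Dmu 2 h (mu_of 2 h p) p" "x \<in> Dmu 2 h (mu_of 2 h (rev_profile p)) (rev_profile p)"
  and z: "z \<in> {1..2}" "z \<notin> Dmu 2 h (mu_of 2 h p) p"
  shows False
proof -
  define \<mu> where "\<mu> = mu_of 2 h p"
  define \<nu> where "\<nu> = mu_of 2 h (rev_profile p)"
  have mp: "h < 2*\<mu>" "\<mu> \<le> h" using mu_props[OF p] h unfolding \<mu>_def by auto
  have xN: "x \<in> {1..2}" and xd: "\<forall>y\<in>{1..2}. cnt h p y x < \<mu>"
    using x(1) unfolding \<mu>_def Dmu_cnt by auto
  have xr: "\<forall>y\<in>{1..2}. cnt h p x y < \<nu>"
    using x(2) unfolding \<nu>_def Dmu_cnt cnt_rev by auto
  obtain w where w: "w \<in> {1..2}" "cnt h p w z \<ge> \<mu>"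
    using z unfolding \<mu>_def Dmu_cnt by (auto simp: not_less)
  have "w \<noteq> z" using w mp cnt_self[of h p z] by auto
  have "x \<noteq> z" using x z by auto
  have wx: "w = x" using \<open>w \<noteq> z\<close> \<open>x \<noteq> z\<close> w(1) xN z(1) by auto
  have c: "cnt h p z x + cnt h p x z = h"
    using cnt_compl[OF p xN z(1) \<open>x \<noteq> z\<close>] by simp
  have "z \<in> Dmu 2 h \<mu> (rev_profile p)"
    unfolding Dmu_cnt cnt_rev
  proof (intro CollectI conjI ballI)
    show "z \<in> {1..2}" by fact
    fix y :: nat assume y: "y \<in> {1..2}"
    hence "y = z \<or> y = x" using z(1) xN \<open>x \<noteq> z\<close> by auto
    thus "cnt h p z y < \<mu>"
      using cnt_self[of h p z] mp c w wx by auto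
  qed
  hence "\<nu> \<le> \<mu>" unfolding \<nu>_def using mp by (intro mu_le) auto
  moreover have "cnt h p x z < \<nu>" using xr z(1) by blast
  ultimately show False using w(2) wx by simp
qed

lemma h3n3_case:
  assumes p: "p \<in> profiles 3 3"
  and x: "x \<in> Dmu 3 3 (mu_of 3 3 p) p" "x \<in> Dmu 3 3 (mu_of 3 3 (rev_profile p)) (rev_profile p)"
  and z: "z \<in> {1..3}" "z \<notin> Dmu 3 3 (mu_of 3 3 p) p"
  shows False
proof -
  define \<mu> where "\<mu> = mu_of 3 3 p"
  define \<nu> where "\<nu> = mu_of 3 3 (rev_profile p)"
  have mp: "3 < 2*\<mu>" "\<mu> \<le> 3" using mu_props[OF p] unfolding \<mu>_def by auto
  have np: "3 < 2*\<nu>" "\<nu> \<le> 3" using mu_props[OF rev_in[OF p]] unfolding \<nu>_def by auto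
  have xN: "x \<in> {1..3}" and xd: "\<forall>y\<in>{1..3}. cnt 3 p y x < \<mu>"
    using x(1) unfolding \<mu>_def Dmu_cnt by auto
  have xr: "\<forall>y\<in>{1..3}. cnt 3 p x y < \<nu>"
    using x(2) unfolding \<nu>_def Dmu_cnt cnt_rev by auto
  have comp: "cnt 3 p a b + cnt 3 p b a = 3" if "a \<in> {1..3}" "b \<in> {1..3}" "a \<noteq> b" for a b
    using cnt_compl[OF p that(2,1)] that by auto
  have le3: "cnt 3 p a b \<le> 3" for a b using cnt_le .
  have self: "cnt 3 p a a = 0" for a using cnt_self .
  have D2p: "\<mu> \<le> 2" if "t \<in> Dmu 3 3 2 p" for t
    unfolding \<mu>_def using that by (intro mu_le) auto
  have D2r: "\<nu> \<le> 2" if "t \<in> Dmu 3 3 2 (rev_profile p)" for t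
    unfolding \<nu>_def using that by (intro mu_le) auto
  have three: "\<exists>u v. {x,u,v} = {1..3} \<and> x \<noteq> u \<and> x \<noteq> v \<and> u \<noteq> v"
  proof -
    have e: "{1..3::nat} = {1,2,3}" by auto
    have "x = 1 \<or> x = 2 \<or> x = 3" using xN by auto
    thus ?thesis
    proof (elim disjE)
      assume "x = 1" thus ?thesis unfolding e by (intro exI[of _ "2::nat"] exI[of _ "3::nat"]) auto
    next
      assume "x = 2" thus ?thesis unfolding e by (intro exI[of _ "1::nat"] exI[of _ "3::nat"]) auto
    next
      assume "x = 3" thus ?thesis unfolding e by (intro exI[of _ "1::nat"] exI[of _ "2::nat"]) auto
    qed
  qed
  then obtain u v where uv: "{x,u,v} = {1..3}" "x \<noteq> u" "x \<noteq> v" "u \<noteq> v" by blast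
  have uN: "u \<in> {1..3}" and vN: "v \<in> {1..3}" using uv(1) by blast+
  have allN: "y = x \<or> y = u \<or> y = v" if "y \<in> {1..3}" for y using uv(1) that by blast
  show False
  proof (cases "\<mu> = 2")
    case True
    have big: "cnt 3 p x y \<ge> 2" if "y \<in> {1..3}" "y \<noteq> x" for y
      using xd comp[OF xN that(1)] that True by force
    have "\<exists>t\<in>{u,v}. t \<in> Dmu 3 3 2 (rev_profile p)"
    proof (cases "cnt 3 p u v \<ge> 2")
      case True
      have "v \<in> Dmu 3 3 2 (rev_profile p)"
        unfolding Dmu_cnt cnt_rev
      proof (intro CollectI conjI ballI)
        show "v \<in> {1..3}" by fact
        fix y :: nat assume "y \<in> {1..3}"
        then consider "y = x" | "y = u" | "y = v" using allN by blast
        thus "cnt 3 p v y < 2"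
        proof cases
          case 1 thus ?thesis using big[OF vN] uv comp[OF vN xN] by force
        next
          case 2 thus ?thesis using True uv comp[OF vN uN] by force
        next
          case 3 thus ?thesis using self by simp
        qed
      qed
      thus ?thesis by blast
    next
      case False
      have "u \<in> Dmu 3 3 2 (rev_profile p)"
        unfolding Dmu_cnt cnt_rev
      proof (intro CollectI conjI ballI)
        show "u \<in> {1..3}" by fact
        fix y :: nat assume "y \<in> {1..3}"
        then consider "y = x" | "y = u" | "y = v" using allN by blast
        thus "cnt 3 p u y < 2"
        proof cases
          case 1 thus ?thesis using big[OF uN] uv comp[OF uN xN] by force
        next
          case 2 thus ?thesis using self by simp
        next
          case 3 thus ?thesis using False by simp
        qed
      qed
      thus ?thesis by blast
    qed
    hence "\<nu> \<le> 2" using D2r by blast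
    thus False using xr big[OF uN] uv by force
  next
    case mu3: False
    hence mu3: "\<mu> = 3" using mp by simp
    show False
    proof (cases "\<nu> = 2")
      case True
      have big: "cnt 3 p y x \<ge> 2" if "y \<in> {1..3}" "y \<noteq> x" for y
        using xr comp[OF xN that(1)] that True by force
      have "\<exists>t\<in>{u,v}. t \<in> Dmu 3 3 2 p"
      proof (cases "cnt 3 p u v \<ge> 2")
        case True
        have "u \<in> Dmu 3 3 2 p"
          unfolding Dmu_cnt
        proof (intro CollectI conjI ballI)
          show "u \<in> {1..3}" by fact
          fix y :: nat assume "y \<in> {1..3}"
          then consider "y = x" | "y = u" | "y = v" using allN by blast
          thus "cnt 3 p y u < 2"
          proof cases
            case 1 thus ?thesis using big[OF uN] uv comp[OF uN xN] by force
          next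
            case 2 thus ?thesis using self by simp
          next
            case 3 thus ?thesis using True uv comp[OF vN uN] by force
          qed
        qed
        thus ?thesis by blast
      next
        case False
        have "v \<in> Dmu 3 3 2 p"
          unfolding Dmu_cnt
        proof (intro CollectI conjI ballI)
          show "v \<in> {1..3}" by fact
          fix y :: nat assume "y \<in> {1..3}"
          then consider "y = x" | "y = u" | "y = v" using allN by blast
          thus "cnt 3 p y v < 2"
          proof cases
            case 1 thus ?thesis using big[OF vN] uv comp[OF vN xN] by force
          next
            case 2 thus ?thesis using False by simp
          next
            case 3 thus ?thesis using self by simp
          qed
        qed
        thus ?thesis by blast
      qed
      hence "\<mu> \<le> 2" using D2p by blast
      thus False using mu3 by simp
    next
      case False
      hence nu3: "\<nu> = 3" using np by simp
      obtain w where w: "w \<in> {1..3}" "cnt 3 p w z \<ge> 3"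
        using z unfolding \<mu>_def[symmetric] mu3 Dmu_cnt by (auto simp: not_less)
      have wz3: "cnt 3 p w z = 3" using w le3 by (meson le_antisym)
      have "w \<noteq> z" using wz3 self by auto
      have "x \<noteq> z" using x z \<mu>_def by auto
      have "w \<noteq> x" using xr nu3 wz3 by (metis less_irrefl w(1) z(1) \<open>x \<noteq> z\<close> xN)
      have zw0: "cnt 3 p z w = 0" using comp[OF w(1) z(1) \<open>w \<noteq> z\<close>] wz3 by simp
      have allN2: "y = x \<or> y = w \<or> y = z" if "y \<in> {1..3}" for y
      proof -
        have "card {x,w,z} = 3" using \<open>w \<noteq> z\<close> \<open>x \<noteq> z\<close> \<open>w \<noteq> x\<close> by auto
        moreover have "{x,w,z} \<subseteq> {1..3}" using xN w(1) z(1) by auto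
        ultimately have "{x,w,z} = {1..3}" by (intro card_subset_eq) auto
        thus ?thesis using that by blast
      qed
      have "w \<notin> Dmu 3 3 2 p" using D2p mu3 by force
      then obtain y where y: "y \<in> {1..3}" "cnt 3 p y w \<ge> 2" using w(1) unfolding Dmu_cnt by (auto simp: not_less)
      have xw: "cnt 3 p x w \<ge> 2" using allN2[OF y(1)] y self zw0 by auto
      have "z \<notin> Dmu 3 3 2 (rev_profile p)" using D2r nu3 by force
      then obtain y' where y': "y' \<in> {1..3}" "cnt 3 p z y' \<ge> 2" using z(1) unfolding Dmu_cnt cnt_rev by (auto simp: not_less)
      have zx: "cnt 3 p z x \<ge> 2" using allN2[OF y'(1)] y' self zw0 by auto
      let ?A = "{i \<in> {1..3::nat}. above (p i) x w}"
      let ?B = "{i \<in> {1..3::nat}. above (p i) z x}"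
      let ?C = "{i \<in> {1..3::nat}. above (p i) w z}"
      have "card ?A + card ?B = card (?A \<union> ?B) + card (?A \<inter> ?B)"
        by (rule card_Un_Int) auto
      moreover have "card (?A \<union> ?B) \<le> 3"
      proof -
        have "card (?A \<union> ?B) \<le> card {1..3::nat}" by (rule card_mono) auto
        thus ?thesis by simp
      qed
      moreover have "card ?A \<ge> 2" "card ?B \<ge> 2" using xw zx unfolding cnt_def by auto
      ultimately have "card (?A \<inter> ?B) \<noteq> 0" by linarith
      hence "?A \<inter> ?B \<noteq> {}" by (metis card.empty)
      then obtain i where i: "i \<in> ?A" "i \<in> ?B" by blast
      have "card ?C = card {1..3::nat}" using wz3 unfolding cnt_def by simp
      hence "?C = {1..3}" by (intro card_subset_eq) auto
      hence "i \<in> ?C" using i by auto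
      have ord: "trans (p i)" "antisym (p i)" using lin_of[OF p, of i] i(1)
        by (auto simp: linear_order_on_def partial_order_on_def preorder_on_def)
      have r1: "(w,x) \<in> p i" and r2: "(x,z) \<in> p i" and r3: "(z,w) \<in> p i"
        using i \<open>i \<in> ?C\<close> unfolding above_def by auto
      have "(z,x) \<in> p i" using transD[OF ord(1) r3 r1] .
      hence "x = z" using antisymD[OF ord(2) r2] by simp
      thus False using \<open>x \<noteq> z\<close> by simp
    qed
  qed
qed

definition O1 :: "nat \<Rightarrow> nat \<Rightarrow> nat" where
  "O1 n v = (if v = 1 then n+3 else if v = 2 then n+2 else if v = 3 then n+1 else v)"
definition O2 :: "nat \<Rightarrow> nat \<Rightarrow> nat" where
  "O2 n v = (if v = 1 then 0 else if v = 2 then n+3 else if v = 3 then n+2 else v)"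
definition O3 :: "nat \<Rightarrow> nat \<Rightarrow> nat" where
  "O3 n v = (if v = 1 then 1 else if v = 2 then 0 else if v = 3 then n+3 else v)"
definition rel :: "nat \<Rightarrow> (nat \<Rightarrow> nat) \<Rightarrow> (nat \<times> nat) set" where
  "rel n s = {(u,v). u \<in> {1..n} \<and> v \<in> {1..n} \<and> s u \<le> s v}"
definition wit :: "nat \<Rightarrow> nat \<Rightarrow> nat \<Rightarrow> (nat \<times> nat) set" where
  "wit n h i = (if i \<le> h div 2 then rel n (O1 n) else if i \<le> 2 * (h div 2) then rel n (O2 n) else rel n (O3 n))"

lemma lin_rel: assumes "inj_on s {1..n}" shows "linear_order_on {1..n} (rel n s)"
  unfolding linear_order_on_def partial_order_on_def preorder_on_def
proof (intro conjI)
  show "rel n s \<subseteq> {1..n} \<times> {1..n}" unfolding rel_def by auto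
  show "refl_on {1..n} (rel n s)" unfolding rel_def refl_on_def by auto
  show "trans (rel n s)"
  proof (rule transI)
    fix a b c assume "(a,b) \<in> rel n s" "(b,c) \<in> rel n s"
    thus "(a,c) \<in> rel n s" unfolding rel_def by auto
  qed
  show "antisym (rel n s)"
  proof (rule antisymI)
    fix a b assume "(a,b) \<in> rel n s" "(b,a) \<in> rel n s"
    hence "s a = s b" "a \<in> {1..n}" "b \<in> {1..n}" unfolding rel_def by auto
    thus "a = b" using inj_onD[OF assms] by blast
  qed
  show "total_on {1..n} (rel n s)" unfolding rel_def total_on_def by auto
qed

lemma inj_O1: "n \<ge> 3 \<Longrightarrow> inj_on (O1 n) {1..n}"
  unfolding inj_on_def O1_def by auto
lemma inj_O2: "n \<ge> 3 \<Longrightarrow> inj_on (O2 n) {1..n}"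
  unfolding inj_on_def O2_def by auto
lemma inj_O3: "n \<ge> 3 \<Longrightarrow> inj_on (O3 n) {1..n}"
  unfolding inj_on_def O3_def by auto

lemma wit_in: assumes "n \<ge> 3" shows "wit n h \<in> profiles n h"
  unfolding profiles_def wit_def
  using lin_rel[OF inj_O1[OF assms]] lin_rel[OF inj_O2[OF assms]] lin_rel[OF inj_O3[OF assms]] by simp

lemma card_three:
  assumes "2*k \<le> h"
  shows "card {i \<in> {1..h}. if i \<le> k then A else if i \<le> 2*k then B else C}
       = (if A then k else 0) + (if B then k else 0) + (if C then h - 2*k else 0)"
proof -
  have e: "{i \<in> {1..h}. if i \<le> k then A else if i \<le> 2*k then B else C}
     = ({i\<in>{1..k}. A} \<union> {i\<in>{k+1..2*k}. B}) \<union> {i\<in>{2*k+1..h}. C}"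
    using assms by auto
  have "card (({i\<in>{1..k}. A} \<union> {i\<in>{k+1..2*k}. B}) \<union> {i\<in>{2*k+1..h}. C})
     = card ({i\<in>{1..k}. A} \<union> {i\<in>{k+1..2*k}. B}) + card {i\<in>{2*k+1..h}. C}"
    by (rule card_Un_disjoint) auto
  also have "card ({i\<in>{1..k}. A} \<union> {i\<in>{k+1..2*k}. B}) = card {i\<in>{1..k}. A} + card {i\<in>{k+1..2*k}. B}"
    by (rule card_Un_disjoint) auto
  finally have *: "card {i \<in> {1..h}. if i \<le> k then A else if i \<le> 2*k then B else C}
     = card {i\<in>{1..k}. A} + card {i\<in>{k+1..2*k}. B} + card {i\<in>{2*k+1..h}. C}"
    unfolding e .
  have "{i\<in>{1..k}. A} = (if A then {1..k} else {})" by auto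
  hence c1: "card {i\<in>{1..k}. A} = (if A then k else 0)" by simp
  have "{i\<in>{k+1..2*k}. B} = (if B then {k+1..2*k} else {})" by auto
  hence c2: "card {i\<in>{k+1..2*k}. B} = (if B then k else 0)" by simp
  have "{i\<in>{2*k+1..h}. C} = (if C then {2*k+1..h} else {})" by auto
  hence c3: "card {i\<in>{2*k+1..h}. C} = (if C then h - 2*k else 0)" using assms by simp
  show ?thesis unfolding * c1 c2 c3 ..
qed

lemma cnt_wit:
  "cnt h (wit n h) y x = (if above (rel n (O1 n)) y x then h div 2 else 0)
     + (if above (rel n (O2 n)) y x then h div 2 else 0)
     + (if above (rel n (O3 n)) y x then h - 2 * (h div 2) else 0)"
proof -
  have "{i \<in> {1..h}. above (wit n h i) y x} = {i \<in> {1..h}. if i \<le> h div 2 then above (rel n (O1 n)) y x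
      else if i \<le> 2*(h div 2) then above (rel n (O2 n)) y x else above (rel n (O3 n)) y x}"
    unfolding wit_def by auto
  thus ?thesis unfolding cnt_def by (rule trans[OF arg_cong[where f=card] card_three]) simp
qed

lemma above_rel: "above (rel n s) y x \<longleftrightarrow> y \<noteq> x \<and> x \<in> {1..n} \<and> y \<in> {1..n} \<and> s x \<le> s y"
  unfolding above_def rel_def by auto

lemma notin_D: "y \<in> {1..n} \<Longrightarrow> cnt h p y z \<ge> \<mu> \<Longrightarrow> z \<notin> Dmu n h \<mu> p"
  unfolding Dmu_cnt by (auto simp: not_less)

lemma construct:
  assumes n3: "n \<ge> 3" and h2: "h \<ge> 2" and nt: "\<not> (n = 3 \<and> h = 3)"
  shows "\<exists>p\<in>profiles n h. Dmu n h (mu_of n h p) p \<noteq> {1..n} \<and>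
            Dmu n h (mu_of n h p) p \<inter> Dmu n h (mu_of n h (rev_profile p)) (rev_profile p) \<noteq> {}"
proof -
  define k where "k = h div 2"
  define r where "r = h - 2 * (h div 2)"
  define p where "p = wit n h"
  define \<mu>0 where "\<mu>0 = k + 1 + r"
  define R1 where "R1 = rel n (O1 n)"
  define R2 where "R2 = rel n (O2 n)"
  define R3 where "R3 = rel n (O3 n)"
  have hk: "h = 2*k + r" "r \<le> 1" "k \<ge> 1" unfolding k_def r_def using h2 by auto
  have cw: "cnt h p y x = (if above R1 y x then k else 0) + (if above R2 y x then k else 0)
                         + (if above R3 y x then r else 0)" for y x
    unfolding p_def k_def r_def R1_def R2_def R3_def by (rule cnt_wit)
  have ab1: "above R1 y x \<longleftrightarrow> y \<noteq> x \<and> x \<in> {1..n} \<and> y \<in> {1..n} \<and> O1 n x \<le> O1 n y" for y x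
    unfolding R1_def by (rule above_rel)
  have ab2: "above R2 y x \<longleftrightarrow> y \<noteq> x \<and> x \<in> {1..n} \<and> y \<in> {1..n} \<and> O2 n x \<le> O2 n y" for y x
    unfolding R2_def by (rule above_rel)
  have ab3: "above R3 y x \<longleftrightarrow> y \<noteq> x \<and> x \<in> {1..n} \<and> y \<in> {1..n} \<and> O3 n x \<le> O3 n y" for y x
    unfolding R3_def by (rule above_rel)
  have pin: "p \<in> profiles n h" unfolding p_def using n3 by (rule wit_in)
  have F1: "cnt h p y 1 < \<mu>0" if "y \<in> {1..n}" for y
  proof -
    have "\<not> above R1 y 1" unfolding ab1 O1_def using that by auto
    thus ?thesis unfolding cw \<mu>0_def by simp
  qed
  have F2: "cnt h p 1 y < \<mu>0" if "y \<in> {1..n}" for y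
  proof -
    have "\<not> above R2 1 y" unfolding ab2 O2_def using that by auto
    thus ?thesis unfolding cw \<mu>0_def by simp
  qed
  have one: "(1::nat) \<in> {1..n}" using n3 by simp
  have two: "(2::nat) \<in> {1..n}" using n3 by simp
  have three: "(3::nat) \<in> {1..n}" using n3 by simp
  have x1: "1 \<in> Dmu n h \<mu>0 p" unfolding Dmu_cnt using F1 one by blast
  have x2: "1 \<in> Dmu n h \<mu>0 (rev_profile p)" unfolding Dmu_cnt cnt_rev using F2 one by blast
  have valid: "h < 2*\<mu>0" "\<mu>0 \<le> h" unfolding \<mu>0_def using hk by auto
  have E1: "Dmu n h (k+1) p = {}" if "r = 1"
  proof -
    have "z \<notin> Dmu n h (k+1) p" if z: "z \<in> {1..n}" for z
    proof -
      consider "z = 1" | "z = 2" | "z = 3" | "z \<ge> 4" using z by force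
      thus ?thesis
      proof cases
        case 1
        have "above R2 3 1" "above R3 3 1" unfolding ab2 ab3 O2_def O3_def using n3 by auto
        hence "cnt h p 3 z \<ge> k+1" unfolding cw using 1 \<open>r = 1\<close> by simp
        thus ?thesis by (rule notin_D[OF three])
      next
        case 2
        have "above R1 1 2" "above R3 1 2" unfolding ab1 ab3 O1_def O3_def using n3 by auto
        hence "cnt h p 1 z \<ge> k+1" unfolding cw using 2 \<open>r = 1\<close> by simp
        thus ?thesis by (rule notin_D[OF one])
      next
        case 3
        have "above R1 2 3" "above R2 2 3" unfolding ab1 ab2 O1_def O2_def using n3 by auto
        hence "cnt h p 2 z \<ge> k+1" unfolding cw using 3 hk by simp
        thus ?thesis by (rule notin_D[OF two])
      next
        case 4
        have "above R1 3 z" "above R2 3 z" "above R3 3 z" unfolding ab1 ab2 ab3 O1_def O2_def O3_def using n3 z 4 by auto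
        hence "cnt h p 3 z \<ge> k+1" unfolding cw using hk \<open>r = 1\<close> by simp
        thus ?thesis by (rule notin_D[OF three])
      qed
    qed
    thus ?thesis unfolding Dmu_cnt by blast
  qed
  have E2: "Dmu n h (k+1) (rev_profile p) = {}" if "r = 1"
  proof -
    have "z \<notin> Dmu n h (k+1) (rev_profile p)" if z: "z \<in> {1..n}" for z
    proof -
      consider "z = 1" | "z = 2" | "z = 3" | "z \<ge> 4" using z by force
      thus ?thesis
      proof cases
        case 1
        have "above R1 1 2" "above R3 1 2" unfolding ab1 ab3 O1_def O3_def using n3 by auto
        hence "cnt h (rev_profile p) 2 z \<ge> k+1" unfolding cnt_rev cw using 1 \<open>r = 1\<close> by simp
        thus ?thesis by (rule notin_D[OF two])
      next
        case 2
        have "above R1 2 3" "above R2 2 3" unfolding ab1 ab2 O1_def O2_def using n3 by auto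
        hence "cnt h (rev_profile p) 3 z \<ge> k+1" unfolding cnt_rev cw using 2 hk by simp
        thus ?thesis by (rule notin_D[OF three])
      next
        case 3
        have "above R2 3 1" "above R3 3 1" unfolding ab2 ab3 O2_def O3_def using n3 by auto
        hence "cnt h (rev_profile p) 1 z \<ge> k+1" unfolding cnt_rev cw using 3 \<open>r = 1\<close> by simp
        thus ?thesis by (rule notin_D[OF one])
      next
        case 4
        have "above R2 z 1" "above R3 z 1" unfolding ab2 ab3 O2_def O3_def using n3 z 4 by auto
        hence "cnt h (rev_profile p) 1 z \<ge> k+1" unfolding cnt_rev cw using \<open>r = 1\<close> by simp
        thus ?thesis by (rule notin_D[OF one])
      qed
    qed
    thus ?thesis unfolding Dmu_cnt by blast
  qed
  have low: "\<mu>0 \<le> \<mu>" if "h < 2*\<mu>" "Dmu n h \<mu> q \<noteq> {}" "r = 1 \<Longrightarrow> Dmu n h (k+1) q = {}" for \<mu> q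
  proof (cases "r = 1")
    case True
    hence "\<mu> \<noteq> k+1" using that by auto
    thus ?thesis using that(1) hk True unfolding \<mu>0_def by auto
  next
    case False
    hence "r = 0" using hk by auto
    thus ?thesis using that(1) hk unfolding \<mu>0_def by auto
  qed
  have m1: "mu_of n h p = \<mu>0" unfolding mu_of_def
  proof (rule Least_equality)
    show "h < 2 * \<mu>0 \<and> \<mu>0 \<le> h \<and> Dmu n h \<mu>0 p \<noteq> {}" using valid x1 by auto
  next
    fix \<mu> assume "h < 2 * \<mu> \<and> \<mu> \<le> h \<and> Dmu n h \<mu> p \<noteq> {}"
    thus "\<mu>0 \<le> \<mu>" using low[of \<mu> p] E1 by blast
  qed
  have m2: "mu_of n h (rev_profile p) = \<mu>0" unfolding mu_of_def
  proof (rule Least_equality)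
    show "h < 2 * \<mu>0 \<and> \<mu>0 \<le> h \<and> Dmu n h \<mu>0 (rev_profile p) \<noteq> {}" using valid x2 by auto
  next
    fix \<mu> assume "h < 2 * \<mu> \<and> \<mu> \<le> h \<and> Dmu n h \<mu> (rev_profile p) \<noteq> {}"
    thus "\<mu>0 \<le> \<mu>" using low[of \<mu> "rev_profile p"] E2 by blast
  qed
  have nz: "\<exists>z\<in>{1..n}. z \<notin> Dmu n h \<mu>0 p"
  proof (cases "n = 3")
    case True
    hence "h \<noteq> 3" using nt by auto
    hence "k \<ge> 1 + r" using hk by auto
    have "above R1 2 3" "above R2 2 3" unfolding ab1 ab2 O1_def O2_def using n3 by auto
    hence "cnt h p 2 3 \<ge> \<mu>0" unfolding cw \<mu>0_def using \<open>k \<ge> 1 + r\<close> by simp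
    thus ?thesis using two three notin_D by blast
  next
    case False
    hence four: "(4::nat) \<in> {1..n}" using n3 by auto
    have "above R1 3 4" "above R2 3 4" "above R3 3 4" unfolding ab1 ab2 ab3 O1_def O2_def O3_def using four by auto
    hence "cnt h p 3 4 \<ge> \<mu>0" unfolding cw \<mu>0_def using hk by simp
    thus ?thesis using three four notin_D by blast
  qed
  show ?thesis
  proof (rule bexI[OF _ pin], intro conjI)
    show "Dmu n h (mu_of n h p) p \<noteq> {1..n}" unfolding m1 using nz by blast
    show "Dmu n h (mu_of n h p) p \<inter> Dmu n h (mu_of n h (rev_profile p)) (rev_profile p) \<noteq> {}"
      unfolding m1 m2 using x1 x2 by blast
  qed
qed


theorem proposition5:
  fixes n h :: nat
  assumes "n \<ge> 2" and "h \<ge> 2"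
  shows "(\<exists>p \<in> profiles n h.
            Dmu n h (mu_of n h p) p \<noteq> {1..n} \<and>
            Dmu n h (mu_of n h p) p \<inter> Dmu n h (mu_of n h (rev_profile p)) (rev_profile p) \<noteq> {})
         \<longleftrightarrow> (h, n) \<notin> T3"
proof
  assume "\<exists>p \<in> profiles n h.
            Dmu n h (mu_of n h p) p \<noteq> {1..n} \<and>
            Dmu n h (mu_of n h p) p \<inter> Dmu n h (mu_of n h (rev_profile p)) (rev_profile p) \<noteq> {}"
  then obtain p where p: "p \<in> profiles n h" and ne: "Dmu n h (mu_of n h p) p \<noteq> {1..n}"
    and int: "Dmu n h (mu_of n h p) p \<inter> Dmu n h (mu_of n h (rev_profile p)) (rev_profile p) \<noteq> {}"
    by blast
  obtain x where x: "x \<in> Dmu n h (mu_of n h p) p" "x \<in> Dmu n h (mu_of n h (rev_profile p)) (rev_profile p)"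
    using int by blast
  have "Dmu n h (mu_of n h p) p \<subseteq> {1..n}" unfolding Dmu_def by auto
  then obtain z where z: "z \<in> {1..n}" "z \<notin> Dmu n h (mu_of n h p) p" using ne by blast
  show "(h, n) \<notin> T3"
  proof
    assume "(h, n) \<in> T3"
    hence "n = 2 \<or> (h = 3 \<and> n = 3)" unfolding T3_def by auto
    thus False
    proof
      assume "n = 2"
      thus False using n2_case[of p h x z] p x z assms(2) by simp
    next
      assume "h = 3 \<and> n = 3"
      thus False using h3n3_case[of p x z] p x z by simp
    qed
  qed
next
  assume "(h, n) \<notin> T3"
  hence "n \<noteq> 2" "\<not> (n = 3 \<and> h = 3)" unfolding T3_def by auto
  hence "n \<ge> 3" using assms(1) by auto
  thus "\<exists>p \<in> profiles n h.
            Dmu n h (mu_of n h p) p \<noteq> {1..n} \<and>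
            Dmu n h (mu_of n h p) p \<inter> Dmu n h (mu_of n h (rev_profile p)) (rev_profile p) \<noteq> {}"
    using construct assms(2) \<open>\<not> (n = 3 \<and> h = 3)\<close> by blast
qed

end
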